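(* Let $X,Y$ be arbitrary real-valued random variables on an atomless probability space (no integrability assumed). Let $(X^{\rm co},Y^{\rm co})$ be a comonotonic version of $(X,Y)$ and $(X^{\rm ct},Y^{\rm ct})$ a counter-monotonic version of $(X,Y)$. Then $$X^{\rm ct}+Y^{\rm ct}\le_{\rm cx} X+Y\le_{\rm cx} X^{\rm co}+Y^{\rm co}.$$
   Context: An expectation $\mathbb E[Z]$ is well-defined if $\mathbb E[\max\{Z,0\}]<\infty$ or $\mathbb E[\max\{-Z,0\}]<\infty$. We write $U\le_{\rm cx}V$ if $\mathbb E[u(U)]\le\mathbb E[u(V)]$ for all convex $u:\mathbb R\to\mathbb R$ such that both expectations are well-defined. A pair $(X,Y)$ is comonotonic if $X=f(Z)$ and $Y=g(Z)$ a.s. for some random variable $Z$ and increasing functions $f,g$; it is counter-monotonic if $(X,-Y)$ is comonotonic. A comonotonic (resp. counter-monotonic) version of $(X,Y)$ is a comonotonic (resp. counter-monotonic) pair $(X',Y')$ with $X'$ equal in distribution to $X$ and $Y'$ equal in distribution to $Y$. *)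

theory Defs
  imports "HOL-Probability.Probability"
begin

definition atomless :: "'a measure \<Rightarrow> bool" where
  "atomless M \<longleftrightarrow> (\<forall>A\<in>sets M. measure M A > 0 \<longrightarrow>
      (\<exists>B\<in>sets M. B \<subseteq> A \<and> 0 < measure M B \<and> measure M B < measure M A))"

definition exp_well_defined :: "'a measure \<Rightarrow> ('a \<Rightarrow> real) \<Rightarrow> bool" where
  "exp_well_defined M Z \<longleftrightarrow>
     (\<integral>\<^sup>+ w. ennreal (max (Z w) 0) \<partial>M) < \<infinity> \<or> (\<integral>\<^sup>+ w. ennreal (max (- Z w) 0) \<partial>M) < \<infinity>"

definition ext_expectation :: "'a measure \<Rightarrow> ('a \<Rightarrow> real) \<Rightarrow> ereal" where
  "ext_expectation M Z =
     enn2ereal (\<integral>\<^sup>+ w. ennreal (max (Z w) 0) \<partial>M) - enn2ereal (\<integral>\<^sup>+ w. ennreal (max (- Z w) 0) \<partial>M)"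

definition cx_le :: "'a measure \<Rightarrow> ('a \<Rightarrow> real) \<Rightarrow> 'b measure \<Rightarrow> ('b \<Rightarrow> real) \<Rightarrow> bool" where
  "cx_le M U N V \<longleftrightarrow> (\<forall>u::real \<Rightarrow> real. convex_on UNIV u \<longrightarrow>
      exp_well_defined M (\<lambda>w. u (U w)) \<longrightarrow> exp_well_defined N (\<lambda>w. u (V w)) \<longrightarrow>
      ext_expectation M (\<lambda>w. u (U w)) \<le> ext_expectation N (\<lambda>w. u (V w)))"

definition comonotonic :: "'a measure \<Rightarrow> ('a \<Rightarrow> real) \<Rightarrow> ('a \<Rightarrow> real) \<Rightarrow> bool" where
  "comonotonic M X Y \<longleftrightarrow> (\<exists>(Z::'a \<Rightarrow> real) (f::real \<Rightarrow> real) (g::real \<Rightarrow> real).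
      Z \<in> borel_measurable M \<and> mono f \<and> mono g \<and>
      (AE w in M. X w = f (Z w) \<and> Y w = g (Z w)))"

definition counter_monotonic :: "'a measure \<Rightarrow> ('a \<Rightarrow> real) \<Rightarrow> ('a \<Rightarrow> real) \<Rightarrow> bool" where
  "counter_monotonic M X Y \<longleftrightarrow> comonotonic M X (\<lambda>w. - Y w)"

definition comonotonic_version ::
  "'a measure \<Rightarrow> ('a \<Rightarrow> real) \<Rightarrow> ('a \<Rightarrow> real) \<Rightarrow> ('a \<Rightarrow> real) \<Rightarrow> ('a \<Rightarrow> real) \<Rightarrow> bool" where
  "comonotonic_version M X Y X' Y' \<longleftrightarrow>
     X' \<in> borel_measurable M \<and> Y' \<in> borel_measurable M \<and> comonotonic M X' Y' \<and>
     distr M borel X' = distr M borel X \<and> distr M borel Y' = distr M borel Y"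

definition counter_monotonic_version ::
  "'a measure \<Rightarrow> ('a \<Rightarrow> real) \<Rightarrow> ('a \<Rightarrow> real) \<Rightarrow> ('a \<Rightarrow> real) \<Rightarrow> ('a \<Rightarrow> real) \<Rightarrow> bool" where
  "counter_monotonic_version M X Y X' Y' \<longleftrightarrow>
     X' \<in> borel_measurable M \<and> Y' \<in> borel_measurable M \<and> counter_monotonic M X' Y' \<and>
     distr M borel X' = distr M borel X \<and> distr M borel Y' = distr M borel Y"

end

theory Submission
  imports Defs
begin

lemma sl_fubini:
  fixes X Y :: "'a \<Rightarrow> real"
  assumes P: "prob_space M" and [measurable]: "X \<in> borel_measurable M" "Y \<in> borel_measurable M"
  shows "(\<integral>\<^sup>+\<omega>. ennreal (X \<omega> + Y \<omega> - d) \<partial>M) =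
         (\<integral>\<^sup>+t. emeasure M {\<omega>\<in>space M. t < X \<omega> \<and> d - t \<le> Y \<omega>} \<partial>lborel)"
proof -
  interpret prob_space M by fact
  interpret pair_sigma_finite M lborel
    by (intro pair_sigma_finite.intro) (simp_all add: sigma_finite_measure_axioms lborel.sigma_finite_measure_axioms)
  have 1: "ennreal (X \<omega> + Y \<omega> - d) = (\<integral>\<^sup>+t. indicator {d - Y \<omega> ..< X \<omega>} t \<partial>lborel)" for \<omega>
    by (cases "d - Y \<omega> \<le> X \<omega>") (auto simp: ennreal_neg)
  have "(\<integral>\<^sup>+\<omega>. ennreal (X \<omega> + Y \<omega> - d) \<partial>M) = (\<integral>\<^sup>+\<omega>. (\<integral>\<^sup>+t. indicator {d - Y \<omega> ..< X \<omega>} t \<partial>lborel) \<partial>M)"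
    by (simp add: 1)
  also have "\<dots> = (\<integral>\<^sup>+t. (\<integral>\<^sup>+\<omega>. indicator {d - Y \<omega> ..< X \<omega>} t \<partial>M) \<partial>lborel)"
  proof (rule Fubini'[symmetric])
    have "Measurable.pred (M \<Otimes>\<^sub>M lborel) (\<lambda>p. d - Y (fst p) \<le> snd p \<and> snd p < X (fst p))"
      by measurable
    then show "(\<lambda>(\<omega>, t). indicator {d - Y \<omega>..<X \<omega>} t :: ennreal) \<in> borel_measurable (M \<Otimes>\<^sub>M lborel)"
      by (auto simp: indicator_def split_beta' intro!: measurable_If)
  qed
  also have "\<dots> = (\<integral>\<^sup>+t. emeasure M {\<omega>\<in>space M. t < X \<omega> \<and> d - t \<le> Y \<omega>} \<partial>lborel)"
  proof (intro nn_integral_cong)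
    fix t
    have "(\<integral>\<^sup>+\<omega>. indicator {d - Y \<omega> ..< X \<omega>} t \<partial>M) = (\<integral>\<^sup>+\<omega>. indicator {\<omega>\<in>space M. t < X \<omega> \<and> d - t \<le> Y \<omega>} \<omega> \<partial>M)"
      by (intro nn_integral_cong) (auto simp: indicator_def)
    also have "\<dots> = emeasure M {\<omega>\<in>space M. t < X \<omega> \<and> d - t \<le> Y \<omega>}"
      by (intro nn_integral_indicator) measurable
    finally show "(\<integral>\<^sup>+\<omega>. indicator {d - Y \<omega> ..< X \<omega>} t \<partial>M) = emeasure M {\<omega>\<in>space M. t < X \<omega> \<and> d - t \<le> Y \<omega>}" .
  qed
  finally show ?thesis .
qed

lemma emeasure_distr_eq:
  fixes X X' :: "'a \<Rightarrow> real"
  assumes [measurable]: "X \<in> borel_measurable M" "X' \<in> borel_measurable M"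
    and eq: "distr M borel X' = distr M borel X" and A[measurable]: "A \<in> sets borel"
  shows "emeasure M {\<omega>\<in>space M. X' \<omega> \<in> A} = emeasure M {\<omega>\<in>space M. X \<omega> \<in> A}"
proof -
  have "emeasure (distr M borel X') A = emeasure (distr M borel X) A" using eq by simp
  then show ?thesis
    by (simp add: emeasure_distr vimage_def Int_def conj_commute)
qed

lemma prob_co:
  fixes X Y X' Y' :: "'a \<Rightarrow> real" and f g :: "real \<Rightarrow> real"
  assumes P: "prob_space M"
    and [measurable]: "X \<in> borel_measurable M" "Y \<in> borel_measurable M"
      "X' \<in> borel_measurable M" "Y' \<in> borel_measurable M"
    and dX: "distr M borel X' = distr M borel X" and dY: "distr M borel Y' = distr M borel Y"
    and f: "mono f" and g: "mono g" and AE: "AE \<omega> in M. X' \<omega> = f (Z \<omega>) \<and> Y' \<omega> = g (Z \<omega>)"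
  shows "emeasure M {\<omega>\<in>space M. t < X \<omega> \<and> s \<le> Y \<omega>} \<le> emeasure M {\<omega>\<in>space M. t < X' \<omega> \<and> s \<le> Y' \<omega>}"
proof -
  have dich: "(\<forall>z. t < f z \<longrightarrow> s \<le> g z) \<or> (\<forall>z. s \<le> g z \<longrightarrow> t < f z)"
  proof (rule ccontr)
    assume "\<not> ?thesis"
    then obtain z1 z2 where 1: "t < f z1" "\<not> s \<le> g z1" and 2: "s \<le> g z2" "\<not> t < f z2" by blast
    show False
    proof (cases "z1 \<le> z2")
      case True then show False using 1 2 monoD[OF f True] by simp
    next
      case False then have "z2 \<le> z1" by simp
      then show False using 1 2 monoD[OF g \<open>z2 \<le> z1\<close>] by simp
    qed
  qed
  then show ?thesis
  proof
    assume H: "\<forall>z. t < f z \<longrightarrow> s \<le> g z"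
    have "emeasure M {\<omega>\<in>space M. t < X \<omega> \<and> s \<le> Y \<omega>} \<le> emeasure M {\<omega>\<in>space M. t < X \<omega>}"
      by (intro emeasure_mono) auto
    also have "\<dots> = emeasure M {\<omega>\<in>space M. X \<omega> \<in> {t<..}}" by simp
    also have "\<dots> = emeasure M {\<omega>\<in>space M. X' \<omega> \<in> {t<..}}"
      by (rule emeasure_distr_eq[symmetric]) (auto simp: dX)
    also have "\<dots> = emeasure M {\<omega>\<in>space M. t < X' \<omega> \<and> s \<le> Y' \<omega>}"
      by (rule emeasure_eq_AE) (use AE H in auto)
    finally show ?thesis .
  next
    assume H: "\<forall>z. s \<le> g z \<longrightarrow> t < f z"
    have "emeasure M {\<omega>\<in>space M. t < X \<omega> \<and> s \<le> Y \<omega>} \<le> emeasure M {\<omega>\<in>space M. s \<le> Y \<omega>}"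
      by (intro emeasure_mono) auto
    also have "\<dots> = emeasure M {\<omega>\<in>space M. Y \<omega> \<in> {s..}}" by simp
    also have "\<dots> = emeasure M {\<omega>\<in>space M. Y' \<omega> \<in> {s..}}"
      by (rule emeasure_distr_eq[symmetric]) (auto simp: dY)
    also have "\<dots> = emeasure M {\<omega>\<in>space M. t < X' \<omega> \<and> s \<le> Y' \<omega>}"
      by (rule emeasure_eq_AE) (use AE H in auto)
    finally show ?thesis .
  qed
qed

lemma prob_ct:
  fixes X Y X' Y' :: "'a \<Rightarrow> real" and f g :: "real \<Rightarrow> real"
  assumes P: "prob_space M"
    and [measurable]: "X \<in> borel_measurable M" "Y \<in> borel_measurable M"
      "X' \<in> borel_measurable M" "Y' \<in> borel_measurable M"
    and dX: "distr M borel X' = distr M borel X" and dY: "distr M borel Y' = distr M borel Y"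
    and f: "mono f" and g: "mono g" and AE: "AE \<omega> in M. X' \<omega> = f (Z \<omega>) \<and> - Y' \<omega> = g (Z \<omega>)"
  shows "emeasure M {\<omega>\<in>space M. t < X' \<omega> \<and> s \<le> Y' \<omega>} \<le> emeasure M {\<omega>\<in>space M. t < X \<omega> \<and> s \<le> Y \<omega>}"
proof -
  interpret prob_space M by fact
  have dich: "(\<forall>z. t < f z \<longrightarrow> \<not> g z \<le> -s) \<or> (\<forall>z. \<not> g z \<le> -s \<longrightarrow> t < f z)"
  proof (rule ccontr)
    assume "\<not> ?thesis"
    then obtain z1 z2 where 1: "t < f z1" "g z1 \<le> -s" and 2: "\<not> g z2 \<le> -s" "\<not> t < f z2" by blast
    show False
    proof (cases "z1 \<le> z2")
      case True then show False using 1 2 monoD[OF f True] by simp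
    next
      case False then have "z2 \<le> z1" by simp
      then show False using 1 2 monoD[OF g \<open>z2 \<le> z1\<close>] by simp
    qed
  qed
  then show ?thesis
  proof
    assume H: "\<forall>z. t < f z \<longrightarrow> \<not> g z \<le> -s"
    have "emeasure M {\<omega>\<in>space M. t < X' \<omega> \<and> s \<le> Y' \<omega>} = emeasure M {}"
    proof (rule emeasure_eq_AE)
      show "AE \<omega> in M. (\<omega> \<in> {\<omega>\<in>space M. t < X' \<omega> \<and> s \<le> Y' \<omega>}) = (\<omega> \<in> {})"
        using AE
      proof eventually_elim
        case (elim \<omega>) then show ?case using H[rule_format, of "Z \<omega>"] by auto
      qed
    qed auto
    then show ?thesis by simp
  next
    assume H: "\<forall>z. \<not> g z \<le> -s \<longrightarrow> t < f z"
    define A where "A = {\<omega>\<in>space M. t < X \<omega>}"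
    define B where "B = {\<omega>\<in>space M. s \<le> Y \<omega>}"
    define A' where "A' = {\<omega>\<in>space M. t < X' \<omega>}"
    define B' where "B' = {\<omega>\<in>space M. s \<le> Y' \<omega>}"
    have [measurable]: "A \<in> sets M" "B \<in> sets M" "A' \<in> sets M" "B' \<in> sets M"
      unfolding A_def B_def A'_def B'_def by measurable
    have eA: "emeasure M A' = emeasure M A"
      using emeasure_distr_eq[of X M X' "{t<..}"] dX unfolding A_def A'_def by simp
    have eB: "emeasure M B' = emeasure M B"
      using emeasure_distr_eq[of Y M Y' "{s..}"] dY unfolding B_def B'_def by simp
    have U: "emeasure M (A' \<union> B') = emeasure M (space M)"
      by (rule emeasure_eq_AE) (use AE H in \<open>auto simp: A'_def B'_def minus_le_iff\<close>)
    have "1 + emeasure M (A' \<inter> B') = emeasure M A' + emeasure M B'"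
      using emeasure_Un_Int[of A' M B'] U emeasure_space_1 by simp
    also have "\<dots> = emeasure M A + emeasure M B" by (simp add: eA eB)
    also have "\<dots> = emeasure M (A \<union> B) + emeasure M (A \<inter> B)"
      by (rule emeasure_Un_Int) auto
    also have "\<dots> \<le> 1 + emeasure M (A \<inter> B)"
      by (intro add_mono order_refl) (metis emeasure_space_1 emeasure_space sets.Un \<open>A \<in> sets M\<close> \<open>B \<in> sets M\<close>)
    finally have "emeasure M (A' \<inter> B') \<le> emeasure M (A \<inter> B)"
      by (subst (asm) ennreal_add_left_cancel_le) auto
    moreover have "A' \<inter> B' = {\<omega>\<in>space M. t < X' \<omega> \<and> s \<le> Y' \<omega>}" "A \<inter> B = {\<omega>\<in>space M. t < X \<omega> \<and> s \<le> Y \<omega>}"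
      unfolding A_def B_def A'_def B'_def by auto
    ultimately show ?thesis by simp
  qed
qed

lemma slope3:
  fixes w :: "real \<Rightarrow> real"
  assumes "convex_on UNIV w" "a < b" "b \<le> x"
  shows "w b + (w b - w a) / (b - a) * (x - b) \<le> w x"
proof (cases "b = x")
  case False
  then have bx: "b < x" using assms by simp
  have "(w a - w b) / (a - b) \<le> (w a - w x) / (a - x)" "(w a - w x) / (a - x) \<le> (w b - w x) / (b - x)"
    using convex_on_slope_le[OF assms(1), of a x b] assms bx by auto
  moreover have "(w b - w a) / (b - a) = (w a - w b) / (a - b)"
    by (metis minus_diff_eq minus_divide_divide)
  moreover have "(w x - w b) / (x - b) = (w b - w x) / (b - x)"
    by (metis minus_diff_eq minus_divide_divide)
  ultimately have "(w b - w a) / (b - a) \<le> (w x - w b) / (x - b)"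
    by linarith
  then have "(w b - w a) / (b - a) * (x - b) \<le> w x - w b"
    using bx by (simp add: pos_le_divide_eq)
  then show ?thesis by simp
qed simp

locale hinge =
  fixes w :: "real \<Rightarrow> real" and c h :: real
  assumes conv: "convex_on UNIV w" and mo: "mono w" and w0: "\<And>x. x \<le> c \<Longrightarrow> w x = 0" and hpos: "h > 0"
begin

definition K :: "nat \<Rightarrow> real" where "K j = c + real j * h"
definition \<sigma> :: "nat \<Rightarrow> real" where "\<sigma> i = (w (K (Suc i)) - w (K i)) / h"
definition a :: "nat \<Rightarrow> real" where "a i = (if i = 0 then \<sigma> 0 else \<sigma> i - \<sigma> (i - 1))"
definition v :: "nat \<Rightarrow> real \<Rightarrow> real" where "v N x = (\<Sum>i<N. a i * max (x - K (Suc i)) 0)"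

lemma w_nonneg: "w x \<ge> 0"
proof (cases "x \<le> c")
  case True then show ?thesis using w0 by simp
next
  case False then have "w c \<le> w x" using mo by (simp add: monoD)
  then show ?thesis using w0[of c] by simp
qed

lemma K_Suc: "K (Suc i) = K i + h" by (simp add: K_def algebra_simps)

lemma sigma_nonneg: "\<sigma> i \<ge> 0"
  unfolding \<sigma>_def using hpos monoD[OF mo, of "K i" "K (Suc i)"] by (simp add: K_Suc)

lemma sigma_mono: "\<sigma> i \<le> \<sigma> (Suc i)"
proof -
  have "w (K (Suc i)) + (w (K (Suc i)) - w (K i)) / (K (Suc i) - K i) * (K (Suc (Suc i)) - K (Suc i)) \<le> w (K (Suc (Suc i)))"
    by (rule slope3[OF conv]) (use hpos in \<open>simp_all add: K_Suc\<close>)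
  then show ?thesis unfolding \<sigma>_def using hpos by (simp add: K_Suc field_simps)
qed

lemma a_nonneg: "a i \<ge> 0"
  unfolding a_def using sigma_nonneg sigma_mono[of "i - 1"] by (cases i) auto

lemma partial: "(\<Sum>i<Suc m. a i * (x - K (Suc i))) = \<sigma> m * (x - K (Suc m)) + w (K m)"
proof (induction m)
  case 0
  then show ?case using w0[of c] by (simp add: a_def K_def)
next
  case (Suc m)
  have "(\<Sum>i<Suc (Suc m). a i * (x - K (Suc i))) = \<sigma> m * (x - K (Suc m)) + w (K m) + (\<sigma> (Suc m) - \<sigma> m) * (x - K (Suc (Suc m)))"
    using Suc by (simp add: a_def)
  also have "\<dots> = \<sigma> (Suc m) * (x - K (Suc (Suc m))) + (\<sigma> m * h + w (K m))"
    by (simp add: K_Suc algebra_simps)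
  also have "\<sigma> m * h + w (K m) = w (K (Suc m))"
    unfolding \<sigma>_def using hpos by simp
  finally show ?case .
qed

definition q :: "real \<Rightarrow> nat" where "q x = nat \<lfloor>(x - c) / h\<rfloor>"

lemma q_le: "i < q x \<Longrightarrow> K (Suc i) \<le> x"
proof -
  assume "i < q x"
  then have "int (Suc i) \<le> \<lfloor>(x - c) / h\<rfloor>" unfolding q_def
    by (simp add: zless_nat_eq_int_zless)
  then have "real (Suc i) \<le> (x - c) / h"
    by (metis le_floor_iff of_int_of_nat_eq)
  then show ?thesis unfolding K_def using hpos by (simp add: field_simps)
qed

lemma q_gt: "q x \<le> i \<Longrightarrow> x < K (Suc i)"
proof -
  assume "q x \<le> i"
  then have "\<lfloor>(x - c) / h\<rfloor> \<le> int i" unfolding q_def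
    by (simp add: nat_le_iff)
  then have "(x - c) / h < real (Suc i)"
    using real_of_int_floor_add_one_gt[of "(x - c) / h"] by linarith
  then show ?thesis unfolding K_def using hpos by (simp add: field_simps)
qed

lemma v_eq: "v N x = (\<Sum>i<min N (q x). a i * (x - K (Suc i)))"
proof -
  let ?m = "min N (q x)"
  have "{..<N} = {..<?m} \<union> {?m..<N}" by auto
  then have "v N x = (\<Sum>i\<in>{..<?m} \<union> {?m..<N}. a i * max (x - K (Suc i)) 0)"
    unfolding v_def by simp
  also have "\<dots> = (\<Sum>i<?m. a i * max (x - K (Suc i)) 0) + (\<Sum>i\<in>{?m..<N}. a i * max (x - K (Suc i)) 0)"
    by (rule sum.union_disjoint) auto
  also have "(\<Sum>i\<in>{?m..<N}. a i * max (x - K (Suc i)) 0) = 0"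
  proof (intro sum.neutral ballI)
    fix i assume "i \<in> {?m..<N}"
    then have "q x \<le> i" by auto
    then show "a i * max (x - K (Suc i)) 0 = 0" using q_gt by simp
  qed
  also have "(\<Sum>i<?m. a i * max (x - K (Suc i)) 0) = (\<Sum>i<?m. a i * (x - K (Suc i)))"
    by (intro sum.cong refl) (use q_le in auto)
  finally show ?thesis by simp
qed

lemma v_le: "v N x \<le> w x"
proof (cases "min N (q x)")
  case 0
  then show ?thesis using v_eq[of N x] w_nonneg by simp
next
  case (Suc m)
  then have "m < q x" by simp
  then have Kx: "K (Suc m) \<le> x" by (rule q_le)
  have "v N x = \<sigma> m * (x - K (Suc m)) + w (K m)" using v_eq[of N x] Suc partial by simp
  also have "\<dots> \<le> \<sigma> m * (x - K (Suc m)) + w (K (Suc m))"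
    using monoD[OF mo, of "K m" "K (Suc m)"] hpos by (simp add: K_Suc)
  also have "\<dots> \<le> w x"
    using slope3[OF conv, of "K m" "K (Suc m)" x] Kx hpos by (simp add: K_Suc \<sigma>_def algebra_simps)
  finally show ?thesis .
qed

lemma v_ge: assumes "x < K N" shows "w (x - 2 * h) \<le> v N x"
proof -
  have "q x \<le> N"
  proof (rule ccontr)
    assume "\<not> q x \<le> N"
    then have "K (Suc N) \<le> x" using q_le[of N x] by simp
    then show False using assms hpos by (simp add: K_Suc)
  qed
  then have m: "min N (q x) = q x" by simp
  show ?thesis
  proof (cases "q x")
    case 0
    then have "x < K 1" using q_gt[of x 0] by simp
    then have "x - 2 * h \<le> c" unfolding K_def using hpos by simp
    then have "w (x - 2 * h) = 0" by (rule w0)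
    moreover have "v N x \<ge> 0" unfolding v_def using a_nonneg by (intro sum_nonneg) simp
    ultimately show ?thesis by simp
  next
    case (Suc m)
    have Kx: "K (Suc m) \<le> x" using q_le[of m x] Suc by simp
    have "x < K (Suc (Suc m))" using q_gt[of x "Suc m"] Suc by simp
    then have "x - 2 * h \<le> K m" by (simp add: K_Suc)
    then have "w (x - 2 * h) \<le> w (K m)" by (rule monoD[OF mo])
    also have "\<dots> \<le> \<sigma> m * (x - K (Suc m)) + w (K m)"
      using sigma_nonneg[of m] Kx by simp
    also have "\<dots> = v N x" using v_eq[of N x] m Suc partial by simp
    finally show ?thesis .
  qed
qed

end

lemma hinge_mono:
  fixes w :: "real \<Rightarrow> real" and S1 S2 :: "'a \<Rightarrow> real"
  assumes conv: "convex_on UNIV w" and mo: "mono w" and w0: "\<And>x. x \<le> c \<Longrightarrow> w x = 0"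
    and S1m[measurable]: "S1 \<in> borel_measurable M" and S2m[measurable]: "S2 \<in> borel_measurable M"
    and SL: "\<And>d. (\<integral>\<^sup>+\<omega>. ennreal (S1 \<omega> - d) \<partial>M) \<le> (\<integral>\<^sup>+\<omega>. ennreal (S2 \<omega> - d) \<partial>M)"
  shows "(\<integral>\<^sup>+\<omega>. ennreal (w (S1 \<omega>)) \<partial>M) \<le> (\<integral>\<^sup>+\<omega>. ennreal (w (S2 \<omega>)) \<partial>M)"
proof -
  define h :: "nat \<Rightarrow> real" where "h n = 1 / real (Suc n)" for n
  define N :: "nat \<Rightarrow> nat" where "N n = (Suc n)^2" for n
  define V where "V n x = hinge.v w c (h n) (N n) x" for n x
  have H: "hinge w c (h n)" for n
    by unfold_locales (use conv mo w0 in \<open>auto simp: h_def\<close>)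
  have cont: "continuous_on UNIV w" by (rule convex_on_continuous[OF open_UNIV conv])
  have [measurable]: "w \<in> borel_measurable borel" by (rule borel_measurable_continuous_onI[OF cont])
  have Vmeas[measurable]: "(\<lambda>\<omega>. V n (S \<omega>)) \<in> borel_measurable M" if [measurable]: "S \<in> borel_measurable M" for n S
    unfolding V_def hinge.v_def[OF H] by measurable
  have Vint: "(\<integral>\<^sup>+\<omega>. ennreal (V n (S \<omega>)) \<partial>M) =
      (\<Sum>i<N n. ennreal (hinge.a w c (h n) i) * (\<integral>\<^sup>+\<omega>. ennreal (S \<omega> - hinge.K c (h n) (Suc i)) \<partial>M))"
    if [measurable]: "S \<in> borel_measurable M" for n S
  proof -
    have "(\<integral>\<^sup>+\<omega>. ennreal (V n (S \<omega>)) \<partial>M) =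
        (\<integral>\<^sup>+\<omega>. (\<Sum>i<N n. ennreal (hinge.a w c (h n) i) * ennreal (S \<omega> - hinge.K c (h n) (Suc i))) \<partial>M)"
    proof (intro nn_integral_cong)
      fix \<omega>
      have "ennreal (V n (S \<omega>)) = (\<Sum>i<N n. ennreal (hinge.a w c (h n) i * max (S \<omega> - hinge.K c (h n) (Suc i)) 0))"
        unfolding V_def hinge.v_def[OF H]
        by (subst sum_ennreal) (auto intro!: mult_nonneg_nonneg hinge.a_nonneg[OF H])
      also have "\<dots> = (\<Sum>i<N n. ennreal (hinge.a w c (h n) i) * ennreal (S \<omega> - hinge.K c (h n) (Suc i)))"
        by (intro sum.cong refl) (simp add: ennreal_mult hinge.a_nonneg[OF H] max.commute[of _ 0] ennreal_max_0)
      finally show "ennreal (V n (S \<omega>)) = (\<Sum>i<N n. ennreal (hinge.a w c (h n) i) * ennreal (S \<omega> - hinge.K c (h n) (Suc i)))" .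
    qed
    also have "\<dots> = (\<Sum>i<N n. (\<integral>\<^sup>+\<omega>. ennreal (hinge.a w c (h n) i) * ennreal (S \<omega> - hinge.K c (h n) (Suc i)) \<partial>M))"
      by (rule nn_integral_sum) measurable
    also have "\<dots> = (\<Sum>i<N n. ennreal (hinge.a w c (h n) i) * (\<integral>\<^sup>+\<omega>. ennreal (S \<omega> - hinge.K c (h n) (Suc i)) \<partial>M))"
      by (intro sum.cong refl nn_integral_cmult) measurable
    finally show ?thesis .
  qed
  have step: "(\<integral>\<^sup>+\<omega>. ennreal (V n (S1 \<omega>)) \<partial>M) \<le> (\<integral>\<^sup>+\<omega>. ennreal (w (S2 \<omega>)) \<partial>M)" for n
  proof -
    have "(\<integral>\<^sup>+\<omega>. ennreal (V n (S1 \<omega>)) \<partial>M) \<le> (\<integral>\<^sup>+\<omega>. ennreal (V n (S2 \<omega>)) \<partial>M)"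
      unfolding Vint[OF S1m] Vint[OF S2m] by (intro sum_mono mult_left_mono SL) auto
    also have "\<dots> \<le> (\<integral>\<^sup>+\<omega>. ennreal (w (S2 \<omega>)) \<partial>M)"
      by (intro nn_integral_mono ennreal_leI) (simp add: V_def hinge.v_le[OF H])
    finally show ?thesis .
  qed
  have lim: "(\<lambda>n. V n x) \<longlonglongrightarrow> w x" for x
  proof (rule tendsto_sandwich[where f="\<lambda>n. w (x - 2 * h n)" and h="\<lambda>n. w x"])
    have "eventually (\<lambda>n. x < c + real (N n) * h n) sequentially"
    proof -
      obtain n0 :: nat where "x - c < real n0" using reals_Archimedean2 by blast
      then show ?thesis
      proof (intro eventually_sequentiallyI[of n0])
        fix n assume "n0 \<le> n" "x - c < real n0"
        then have "x - c < real (Suc n)" by simp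
        also have "real (Suc n) = real (N n) * h n" by (simp add: N_def h_def power2_eq_square field_simps)
        finally show "x < c + real (N n) * h n" by simp
      qed
    qed
    then show "eventually (\<lambda>n. w (x - 2 * h n) \<le> V n x) sequentially"
      by eventually_elim (simp add: V_def hinge.v_ge[OF H] hinge.K_def[OF H])
    show "eventually (\<lambda>n. V n x \<le> w x) sequentially"
      by (simp add: V_def hinge.v_le[OF H])
    show "(\<lambda>n. w x) \<longlonglongrightarrow> w x" by simp
    have "(\<lambda>n. x - 2 * h n) \<longlonglongrightarrow> x - 2 * 0"
      unfolding h_def by (intro tendsto_intros LIMSEQ_inverse_real_of_nat[unfolded inverse_eq_divide])
    then have "(\<lambda>n. x - 2 * h n) \<longlonglongrightarrow> x" by simp
    then show "(\<lambda>n. w (x - 2 * h n)) \<longlonglongrightarrow> w x"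
      using cont by (metis UNIV_I continuous_on_eq_continuous_at open_UNIV isCont_tendsto_compose)
  qed
  have "(\<integral>\<^sup>+\<omega>. ennreal (w (S1 \<omega>)) \<partial>M) = (\<integral>\<^sup>+\<omega>. liminf (\<lambda>n. ennreal (V n (S1 \<omega>))) \<partial>M)"
  proof (intro nn_integral_cong)
    fix \<omega>
    have "(\<lambda>n. ennreal (V n (S1 \<omega>))) \<longlonglongrightarrow> ennreal (w (S1 \<omega>))"
      by (intro tendsto_ennrealI lim)
    then show "ennreal (w (S1 \<omega>)) = liminf (\<lambda>n. ennreal (V n (S1 \<omega>)))"
      by (simp add: lim_imp_Liminf)
  qed
  also have "\<dots> \<le> liminf (\<lambda>n. \<integral>\<^sup>+\<omega>. ennreal (V n (S1 \<omega>)) \<partial>M)"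
    by (rule nn_integral_liminf) measurable
  also have "\<dots> \<le> liminf (\<lambda>n. \<integral>\<^sup>+\<omega>. ennreal (w (S2 \<omega>)) \<partial>M)"
    by (intro Liminf_mono always_eventually allI step)
  also have "\<dots> = (\<integral>\<^sup>+\<omega>. ennreal (w (S2 \<omega>)) \<partial>M)"
    by (simp add: Liminf_const)
  finally show ?thesis .
qed

lemma ext_exp_integrable:
  fixes Z :: "'a \<Rightarrow> real"
  assumes Z: "integrable M Z"
  shows "ext_expectation M Z = ereal (integral\<^sup>L M Z)"
proof -
  have i1: "integrable M (\<lambda>x. max (Z x) 0)" and i2: "integrable M (\<lambda>x. max (- Z x) 0)"
    using Z by auto
  have e1: "(\<integral>\<^sup>+x. ennreal (max (Z x) 0) \<partial>M) = ennreal (integral\<^sup>L M (\<lambda>x. max (Z x) 0))"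
    by (rule nn_integral_eq_integral[OF i1]) auto
  have e2: "(\<integral>\<^sup>+x. ennreal (max (- Z x) 0) \<partial>M) = ennreal (integral\<^sup>L M (\<lambda>x. max (- Z x) 0))"
    by (rule nn_integral_eq_integral[OF i2]) auto
  have "integral\<^sup>L M Z = integral\<^sup>L M (\<lambda>x. max (Z x) 0 - max (- Z x) 0)"
    by (intro Bochner_Integration.integral_cong) auto
  also have "\<dots> = integral\<^sup>L M (\<lambda>x. max (Z x) 0) - integral\<^sup>L M (\<lambda>x. max (- Z x) 0)"
    by (rule Bochner_Integration.integral_diff[OF i1 i2])
  finally show ?thesis
    unfolding ext_expectation_def e1 e2 by (simp add: integral_nonneg_AE)
qed

lemma ext_exp_shift:
  fixes P :: "'a \<Rightarrow> real"
  assumes "prob_space M" and Pm[measurable]: "P \<in> borel_measurable M" and P0: "\<And>\<omega>. \<omega> \<in> space M \<Longrightarrow> 0 \<le> P \<omega>"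
  shows "ext_expectation M (\<lambda>\<omega>. a + P \<omega>) = ereal a + enn2ereal (\<integral>\<^sup>+\<omega>. ennreal (P \<omega>) \<partial>M)"
proof -
  interpret prob_space M by fact
  show ?thesis
  proof (cases "(\<integral>\<^sup>+\<omega>. ennreal (P \<omega>) \<partial>M) = \<infinity>")
    case False
    then obtain r where r: "(\<integral>\<^sup>+\<omega>. ennreal (P \<omega>) \<partial>M) = ennreal r" "0 \<le> r"
      by (cases "(\<integral>\<^sup>+\<omega>. ennreal (P \<omega>) \<partial>M)" rule: ennreal_cases) auto
    have iP: "integrable M P"
      by (rule integrableI_nn_integral_finite[OF Pm _ r(1)]) (auto simp: P0)
    have "ennreal (integral\<^sup>L M P) = ennreal r"
      using nn_integral_eq_integral[OF iP] r P0 by auto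
    then have IP: "integral\<^sup>L M P = r"
      using r(2) integral_nonneg_AE[of P M] P0 by (simp add: AE_I2)
    have "ext_expectation M (\<lambda>\<omega>. a + P \<omega>) = ereal (integral\<^sup>L M (\<lambda>\<omega>. a + P \<omega>))"
      by (rule ext_exp_integrable) (use iP in auto)
    also have "integral\<^sup>L M (\<lambda>\<omega>. a + P \<omega>) = a + r"
      using iP IP by (simp add: Bochner_Integration.integral_add prob_space)
    finally show ?thesis using r by simp
  next
    case True
    have "(\<integral>\<^sup>+\<omega>. ennreal (P \<omega>) \<partial>M) \<le> (\<integral>\<^sup>+\<omega>. ennreal (max (a + P \<omega>) 0) + ennreal \<bar>a\<bar> \<partial>M)"
    proof (intro nn_integral_mono)
      fix x
      have "ennreal (P x) \<le> ennreal (max (a + P x) 0 + \<bar>a\<bar>)" by (intro ennreal_leI) auto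
      also have "\<dots> = ennreal (max (a + P x) 0) + ennreal \<bar>a\<bar>" by (rule ennreal_plus) auto
      finally show "ennreal (P x) \<le> ennreal (max (a + P x) 0) + ennreal \<bar>a\<bar>" .
    qed
    also have "\<dots> = (\<integral>\<^sup>+\<omega>. ennreal (max (a + P \<omega>) 0) \<partial>M) + ennreal \<bar>a\<bar>"
      by (subst nn_integral_add) (auto simp: emeasure_space_1)
    finally have T1: "(\<integral>\<^sup>+\<omega>. ennreal (max (a + P \<omega>) 0) \<partial>M) = \<infinity>"
      using True by (simp add: top_unique ennreal_add_eq_top)
    have "(\<integral>\<^sup>+\<omega>. ennreal (max (- (a + P \<omega>)) 0) \<partial>M) \<le> (\<integral>\<^sup>+\<omega>. ennreal \<bar>a\<bar> \<partial>M)"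
      by (intro nn_integral_mono ennreal_leI) (auto dest!: P0)
    also have "\<dots> = ennreal \<bar>a\<bar>" by (simp add: emeasure_space_1)
    finally have le: "(\<integral>\<^sup>+\<omega>. ennreal (max (- (a + P \<omega>)) 0) \<partial>M) \<le> ennreal \<bar>a\<bar>" .
    have T2: "(\<integral>\<^sup>+\<omega>. ennreal (max (- (a + P \<omega>)) 0) \<partial>M) \<noteq> \<infinity>"
    proof
      assume "(\<integral>\<^sup>+\<omega>. ennreal (max (- (a + P \<omega>)) 0) \<partial>M) = \<infinity>"
      with le show False
        by (simp add: top_unique)
    qed
    obtain r where r: "(\<integral>\<^sup>+\<omega>. ennreal (max (- (a + P \<omega>)) 0) \<partial>M) = ennreal r" "0 \<le> r"
      using T2 by (cases "(\<integral>\<^sup>+\<omega>. ennreal (max (- (a + P \<omega>)) 0) \<partial>M)" rule: ennreal_cases) auto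
    show ?thesis unfolding ext_expectation_def T1 True r(1) using r(2) by simp
  qed
qed

lemma ext_exp_mono:
  fixes Z W :: "'a \<Rightarrow> real"
  assumes "\<And>\<omega>. \<omega> \<in> space M \<Longrightarrow> Z \<omega> \<le> W \<omega>"
  shows "ext_expectation M Z \<le> ext_expectation M W"
  unfolding ext_expectation_def
proof (rule ereal_minus_mono)
  show "enn2ereal (\<integral>\<^sup>+ w. ennreal (max (Z w) 0) \<partial>M) \<le> enn2ereal (\<integral>\<^sup>+ w. ennreal (max (W w) 0) \<partial>M)"
    using assms by (auto intro!: nn_integral_mono ennreal_leI simp: less_eq_ennreal.rep_eq[symmetric])
  show "enn2ereal (\<integral>\<^sup>+ w. ennreal (max (- W w) 0) \<partial>M) \<le> enn2ereal (\<integral>\<^sup>+ w. ennreal (max (- Z w) 0) \<partial>M)"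
    using assms by (auto intro!: nn_integral_mono ennreal_leI simp: less_eq_ennreal.rep_eq[symmetric])
qed

lemma mono_right:
  fixes u :: "real \<Rightarrow> real"
  assumes conv: "convex_on UNIV u" and umin: "\<And>x. u c \<le> u x" and "c \<le> p" "p \<le> q"
  shows "u p \<le> u q"
proof (cases "p = c")
  case True then show ?thesis using umin by simp
next
  case False
  then have cp: "c < p" using assms by simp
  have "u p + (u p - u c) / (p - c) * (q - p) \<le> u q"
    by (rule slope3[OF conv cp \<open>p \<le> q\<close>])
  moreover have "0 \<le> (u p - u c) / (p - c) * (q - p)"
    using umin[of p] cp \<open>p \<le> q\<close> by (intro mult_nonneg_nonneg divide_nonneg_pos) auto
  ultimately show ?thesis by linarith
qed

lemma gR_props:
  fixes u :: "real \<Rightarrow> real"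
  assumes conv: "convex_on UNIV u" and umin: "\<And>x. u c \<le> u x"
  shows "convex_on UNIV (\<lambda>x. u (max x c) - u c)" "mono (\<lambda>x. u (max x c) - u c)"
    "\<And>x. x \<le> c \<Longrightarrow> u (max x c) - u c = 0"
proof -
  show "convex_on UNIV (\<lambda>x. u (max x c) - u c)"
  proof (rule convex_onI)
    fix t x y :: real assume t: "0 < t" "t < 1"
    define p where "p = (1 - t) * max x c + t * max y c"
    have a1: "(1 - t) * x \<le> (1 - t) * max x c" by (intro mult_left_mono) (use t in auto)
    have a2: "t * y \<le> t * max y c" by (intro mult_left_mono) (use t in auto)
    have a3: "(1 - t) * c \<le> (1 - t) * max x c" by (intro mult_left_mono) (use t in auto)
    have a4: "t * c \<le> t * max y c" by (intro mult_left_mono) (use t in auto)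
    have a5: "c = (1 - t) * c + t * c" by (simp add: algebra_simps)
    have "max ((1 - t) * x + t * y) c \<le> p"
      unfolding p_def max.bounded_iff using a1 a2 a3 a4 a5 by linarith
    then have "u (max ((1 - t) * x + t * y) c) \<le> u p"
      by (intro mono_right[OF conv umin]) auto
    also have "u p \<le> (1 - t) * u (max x c) + t * u (max y c)"
      unfolding p_def using convex_onD[OF conv, of t "max x c" "max y c"] t by simp
    finally show "u (max ((1 - t) *\<^sub>R x + t *\<^sub>R y) c) - u c \<le> (1 - t) * (u (max x c) - u c) + t * (u (max y c) - u c)"
      by (simp add: algebra_simps)
  qed simp
  show "mono (\<lambda>x. u (max x c) - u c)"
    by (intro monoI) (simp add: mono_right[OF conv umin])
  show "\<And>x. x \<le> c \<Longrightarrow> u (max x c) - u c = 0" by simp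
qed

lemma convex_on_neg:
  fixes u :: "real \<Rightarrow> real"
  assumes conv: "convex_on UNIV u"
  shows "convex_on UNIV (\<lambda>y. u (- y))"
proof (rule convex_onI)
  fix t x y :: real assume t: "0 < t" "t < 1"
  have "u ((1 - t) * (- x) + t * (- y)) \<le> (1 - t) * u (- x) + t * u (- y)"
    using convex_onD[OF conv, of t "- x" "- y"] t by simp
  then show "u (- ((1 - t) *\<^sub>R x + t *\<^sub>R y)) \<le> (1 - t) * u (- x) + t * u (- y)"
    by (simp add: algebra_simps)
qed simp

lemma min_case:
  fixes u :: "real \<Rightarrow> real" and S1 S2 :: "'a \<Rightarrow> real"
  assumes P: "prob_space M" and conv: "convex_on UNIV u" and umin: "\<And>x. u c \<le> u x"
    and S1m[measurable]: "S1 \<in> borel_measurable M" and S2m[measurable]: "S2 \<in> borel_measurable M"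
    and SLp: "\<And>d. (\<integral>\<^sup>+\<omega>. ennreal (S1 \<omega> - d) \<partial>M) \<le> (\<integral>\<^sup>+\<omega>. ennreal (S2 \<omega> - d) \<partial>M)"
    and SLm: "\<And>d. (\<integral>\<^sup>+\<omega>. ennreal (d - S1 \<omega>) \<partial>M) \<le> (\<integral>\<^sup>+\<omega>. ennreal (d - S2 \<omega>) \<partial>M)"
  shows "ext_expectation M (\<lambda>\<omega>. u (S1 \<omega>)) \<le> ext_expectation M (\<lambda>\<omega>. u (S2 \<omega>))"
proof -
  have cont: "continuous_on UNIV u" by (rule convex_on_continuous[OF open_UNIV conv])
  have [measurable]: "u \<in> borel_measurable borel" by (rule borel_measurable_continuous_onI[OF cont])
  define gR where "gR x = u (max x c) - u c" for x
  define gL where "gL x = u (min x c) - u c" for x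
  define u' where "u' y = u (- y)" for y
  define gR' where "gR' y = u' (max y (- c)) - u' (- c)" for y
  have conv': "convex_on UNIV u'" unfolding u'_def by (rule convex_on_neg[OF conv])
  have umin': "u' (- c) \<le> u' x" for x unfolding u'_def using umin by simp
  have gLR: "gL x = gR' (- x)" for x
    unfolding gL_def gR'_def u'_def by (simp add: max_def min_def)
  have gR0: "gR x \<ge> 0" for x unfolding gR_def using umin by simp
  have gL0: "gL x \<ge> 0" for x unfolding gL_def using umin by simp
  have decomp: "u x = u c + (gR x + gL x)" for x
    unfolding gR_def gL_def by (cases "x \<le> c") (auto simp: max_def min_def)
  have [measurable]: "gR \<in> borel_measurable borel" "gL \<in> borel_measurable borel"
    unfolding gR_def gL_def by measurable
  have E: "ext_expectation M (\<lambda>\<omega>. u (S \<omega>)) = ereal (u c) + (enn2ereal (\<integral>\<^sup>+\<omega>. ennreal (gR (S \<omega>)) \<partial>M) + enn2ereal (\<integral>\<^sup>+\<omega>. ennreal (gL (S \<omega>)) \<partial>M))"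
    if [measurable]: "S \<in> borel_measurable M" for S
  proof -
    have "ext_expectation M (\<lambda>\<omega>. u (S \<omega>)) = ext_expectation M (\<lambda>\<omega>. u c + (gR (S \<omega>) + gL (S \<omega>)))"
      by (simp only: decomp[symmetric])
    also have "\<dots> = ereal (u c) + enn2ereal (\<integral>\<^sup>+\<omega>. ennreal (gR (S \<omega>) + gL (S \<omega>)) \<partial>M)"
      by (rule ext_exp_shift[OF P]) (auto intro: add_nonneg_nonneg gR0 gL0)
    also have "(\<integral>\<^sup>+\<omega>. ennreal (gR (S \<omega>) + gL (S \<omega>)) \<partial>M) = (\<integral>\<^sup>+\<omega>. ennreal (gR (S \<omega>)) + ennreal (gL (S \<omega>)) \<partial>M)"
      by (intro nn_integral_cong ennreal_plus gR0 gL0)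
    also have "\<dots> = (\<integral>\<^sup>+\<omega>. ennreal (gR (S \<omega>)) \<partial>M) + (\<integral>\<^sup>+\<omega>. ennreal (gL (S \<omega>)) \<partial>M)"
      by (rule nn_integral_add) auto
    finally show ?thesis by (simp add: plus_ennreal.rep_eq)
  qed
  have R: "(\<integral>\<^sup>+\<omega>. ennreal (gR (S1 \<omega>)) \<partial>M) \<le> (\<integral>\<^sup>+\<omega>. ennreal (gR (S2 \<omega>)) \<partial>M)"
    unfolding gR_def
    by (rule hinge_mono[OF gR_props[OF conv umin] S1m S2m SLp])
  have L: "(\<integral>\<^sup>+\<omega>. ennreal (gL (S1 \<omega>)) \<partial>M) \<le> (\<integral>\<^sup>+\<omega>. ennreal (gL (S2 \<omega>)) \<partial>M)"
  proof -
    have SL': "(\<integral>\<^sup>+\<omega>. ennreal (- S1 \<omega> - d) \<partial>M) \<le> (\<integral>\<^sup>+\<omega>. ennreal (- S2 \<omega> - d) \<partial>M)" for d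
    proof -
      have e: "(\<lambda>\<omega>. ennreal (- S \<omega> - d)) = (\<lambda>\<omega>. ennreal (- d - S \<omega>))" for S :: "'a \<Rightarrow> real"
        by (intro ext arg_cong[where f=ennreal]) linarith
      show ?thesis unfolding e[of S1] e[of S2] by (rule SLm)
    qed
    have "(\<integral>\<^sup>+\<omega>. ennreal (gR' (- S1 \<omega>)) \<partial>M) \<le> (\<integral>\<^sup>+\<omega>. ennreal (gR' (- S2 \<omega>)) \<partial>M)"
      unfolding gR'_def
      by (rule hinge_mono[where ?S1.0="\<lambda>\<omega>. - S1 \<omega>" and ?S2.0="\<lambda>\<omega>. - S2 \<omega>" and M=M, OF gR_props[OF conv' umin']]) (auto simp: SL')
    then show ?thesis by (simp add: gLR)
  qed
  show ?thesis unfolding E[OF S1m] E[OF S2m]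
    by (intro add_mono order_refl) (use R L in \<open>simp_all add: less_eq_ennreal.rep_eq[symmetric]\<close>)
qed

lemma approx_seq:
  fixes u :: "real \<Rightarrow> real"
  shows "\<exists>m::nat \<Rightarrow> real. (\<forall>n. m (Suc n) \<le> m n) \<and> (\<forall>n. \<exists>x. u x \<le> m n) \<and>
           (\<forall>x. (\<lambda>n. max (u x) (m n)) \<longlonglongrightarrow> u x)"
proof (cases "bdd_below (range u)")
  case True
  define I where "I = Inf (range u)"
  have Ile: "I \<le> u x" for x unfolding I_def by (rule cInf_lower[OF _ True]) simp
  define m where "m n = I + 1 / real (Suc n)" for n
  have "\<forall>n. m (Suc n) \<le> m n" unfolding m_def by (simp add: frac_le)
  moreover have "\<forall>n. \<exists>x. u x \<le> m n"
  proof
    fix n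
    have "Inf (range u) < m n" unfolding m_def I_def by simp
    then obtain y where "y \<in> range u" "y < m n" using cInf_lessD[of "range u"] by blast
    then obtain x where "u x < m n" by auto
    then show "\<exists>x. u x \<le> m n" by (intro exI[of _ x]) simp
  qed
  moreover have "\<forall>x. (\<lambda>n. max (u x) (m n)) \<longlonglongrightarrow> u x"
  proof
    fix x
    have "(\<lambda>n. max (u x) (I + 1 / real (Suc n))) \<longlonglongrightarrow> max (u x) (I + 0)"
      by (intro tendsto_intros LIMSEQ_inverse_real_of_nat[unfolded inverse_eq_divide])
    then show "(\<lambda>n. max (u x) (m n)) \<longlonglongrightarrow> u x" using Ile[of x] by (simp add: m_def max_def)
  qed
  ultimately show ?thesis by blast
next
  case False
  define m where "m n = - real n" for n
  have "\<forall>n. m (Suc n) \<le> m n" unfolding m_def by simp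
  moreover have "\<forall>n. \<exists>x. u x \<le> m n"
    using False unfolding bdd_below_def by (auto simp: not_le intro: less_imp_le)
  moreover have "\<forall>x. (\<lambda>n. max (u x) (m n)) \<longlonglongrightarrow> u x"
  proof
    fix x
    obtain n0 :: nat where n0: "- u x < real n0" using reals_Archimedean2 by blast
    have "eventually (\<lambda>n. max (u x) (m n) = u x) sequentially"
      by (rule eventually_sequentiallyI[of n0]) (use n0 in \<open>auto simp: m_def max_def\<close>)
    then show "(\<lambda>n. max (u x) (m n)) \<longlonglongrightarrow> u x" by (rule tendsto_eventually)
  qed
  ultimately show ?thesis by blast
qed

lemma convex_on_max_const:
  fixes u :: "real \<Rightarrow> real"
  assumes conv: "convex_on UNIV u"
  shows "convex_on UNIV (\<lambda>x. max (u x) a)"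
proof (rule convex_onI)
  fix t x y :: real assume t: "0 < t" "t < 1"
  have 1: "u ((1 - t) * x + t * y) \<le> (1 - t) * u x + t * u y"
    using convex_onD[OF conv, of t x y] t by simp
  have 2: "(1 - t) * u x \<le> (1 - t) * max (u x) a" "t * u y \<le> t * max (u y) a"
    "(1 - t) * a \<le> (1 - t) * max (u x) a" "t * a \<le> t * max (u y) a"
    using t by (auto intro!: mult_left_mono)
  have 3: "a = (1 - t) * a + t * a" by (simp add: algebra_simps)
  show "max (u ((1 - t) *\<^sub>R x + t *\<^sub>R y)) a \<le> (1 - t) * max (u x) a + t * max (u y) a"
    using 1 2 3 by (simp only: real_scaleR_def max.bounded_iff) linarith
qed simp

lemma cx_from_sl:
  fixes S1 S2 :: "'a \<Rightarrow> real"
  assumes P: "prob_space M"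
    and S1m[measurable]: "S1 \<in> borel_measurable M" and S2m[measurable]: "S2 \<in> borel_measurable M"
    and SLp: "\<And>d. (\<integral>\<^sup>+\<omega>. ennreal (S1 \<omega> - d) \<partial>M) \<le> (\<integral>\<^sup>+\<omega>. ennreal (S2 \<omega> - d) \<partial>M)"
    and SLm: "\<And>d. (\<integral>\<^sup>+\<omega>. ennreal (d - S1 \<omega>) \<partial>M) \<le> (\<integral>\<^sup>+\<omega>. ennreal (d - S2 \<omega>) \<partial>M)"
  shows "cx_le M S1 M S2"
  unfolding cx_le_def
proof (intro allI impI)
  fix u :: "real \<Rightarrow> real"
  assume conv: "convex_on UNIV u" and wd1: "exp_well_defined M (\<lambda>w. u (S1 w))"
    and wd2: "exp_well_defined M (\<lambda>w. u (S2 w))"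
  have cont: "continuous_on UNIV u" by (rule convex_on_continuous[OF open_UNIV conv])
  have [measurable]: "u \<in> borel_measurable borel" by (rule borel_measurable_continuous_onI[OF cont])
  define A where "A = (\<integral>\<^sup>+\<omega>. ennreal (max (u (S2 \<omega>)) 0) \<partial>M)"
  define B where "B = (\<integral>\<^sup>+\<omega>. ennreal (max (- u (S2 \<omega>)) 0) \<partial>M)"
  have E2: "ext_expectation M (\<lambda>\<omega>. u (S2 \<omega>)) = enn2ereal A - enn2ereal B"
    by (simp add: ext_expectation_def A_def B_def)
  show "ext_expectation M (\<lambda>\<omega>. u (S1 \<omega>)) \<le> ext_expectation M (\<lambda>\<omega>. u (S2 \<omega>))"
  proof (cases "A = \<infinity>")
    case True
    then have "B \<noteq> \<infinity>" using wd2 unfolding exp_well_defined_def A_def B_def by auto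
    then obtain r where "B = ennreal r" "0 \<le> r" by (cases B rule: ennreal_cases) auto
    then have "ext_expectation M (\<lambda>\<omega>. u (S2 \<omega>)) = \<infinity>" using True E2 by simp
    then show ?thesis by simp
  next
    case Afin: False
    obtain m :: "nat \<Rightarrow> real" where mdec: "\<And>n. m (Suc n) \<le> m n" and mex: "\<And>n. \<exists>x. u x \<le> m n"
      and mlim: "\<And>x. (\<lambda>n. max (u x) (m n)) \<longlonglongrightarrow> u x"
      using approx_seq[of u] by blast
    define un where "un n x = max (u x) (m n)" for n x
    have un_conv: "convex_on UNIV (un n)" for n
      unfolding un_def by (rule convex_on_max_const[OF conv])
    have un_min: "\<exists>c. \<forall>x. un n c \<le> un n x" for n
    proof -
      obtain x0 where "u x0 \<le> m n" using mex by blast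
      then have "un n x0 = m n" by (simp add: un_def)
      then show ?thesis unfolding un_def by (intro exI[of _ x0]) auto
    qed
    define An where "An n = (\<integral>\<^sup>+\<omega>. ennreal (max (un n (S2 \<omega>)) 0) \<partial>M)" for n
    define Bn where "Bn n = (\<integral>\<^sup>+\<omega>. ennreal (max (- un n (S2 \<omega>)) 0) \<partial>M)" for n
    have bound: "ext_expectation M (\<lambda>\<omega>. u (S1 \<omega>)) \<le> enn2ereal (An n) - enn2ereal (Bn n)" for n
    proof -
      have "ext_expectation M (\<lambda>\<omega>. u (S1 \<omega>)) \<le> ext_expectation M (\<lambda>\<omega>. un n (S1 \<omega>))"
        by (rule ext_exp_mono) (simp add: un_def)
      also have "\<dots> \<le> ext_expectation M (\<lambda>\<omega>. un n (S2 \<omega>))"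
      proof -
        obtain c where "\<forall>x. un n c \<le> un n x" using un_min by blast
        then show ?thesis by (intro min_case[OF P un_conv, where c=c] S1m S2m SLp SLm) auto
      qed
      also have "\<dots> = enn2ereal (An n) - enn2ereal (Bn n)"
        by (simp add: ext_expectation_def An_def Bn_def)
      finally show ?thesis .
    qed
    have [measurable]: "un n \<in> borel_measurable borel" for n unfolding un_def by measurable
    define fA where "fA n \<omega> = ennreal (max (un n (S2 \<omega>)) 0)" for n \<omega>
    have fA_dec: "decseq fA"
      unfolding fA_def un_def
      by (intro decseq_SucI le_funI ennreal_leI max.mono order_refl mdec)
    have fA_fin: "(\<integral>\<^sup>+\<omega>. fA n \<omega> \<partial>M) < \<infinity>" for n
    proof -
      interpret prob_space M by fact
      have "(\<integral>\<^sup>+\<omega>. fA n \<omega> \<partial>M) \<le> (\<integral>\<^sup>+\<omega>. ennreal (max (u (S2 \<omega>)) 0) + ennreal \<bar>m n\<bar> \<partial>M)"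
      proof (intro nn_integral_mono)
        fix \<omega>
        have "fA n \<omega> \<le> ennreal (max (u (S2 \<omega>)) 0 + \<bar>m n\<bar>)"
          unfolding fA_def un_def by (intro ennreal_leI) auto
        also have "\<dots> = ennreal (max (u (S2 \<omega>)) 0) + ennreal \<bar>m n\<bar>" by (rule ennreal_plus) auto
        finally show "fA n \<omega> \<le> ennreal (max (u (S2 \<omega>)) 0) + ennreal \<bar>m n\<bar>" .
      qed
      also have "\<dots> = A + ennreal \<bar>m n\<bar>"
        unfolding A_def by (subst nn_integral_add) (auto simp: emeasure_space_1)
      also have "\<dots> < \<infinity>" using Afin by (simp add: less_top[symmetric])
      finally show ?thesis .
    qed
    have fA_lim: "(\<lambda>n. fA n \<omega>) \<longlonglongrightarrow> ennreal (max (u (S2 \<omega>)) 0)" for \<omega>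
      unfolding fA_def un_def by (intro tendsto_ennrealI tendsto_max mlim tendsto_const)
    have fA_INF: "(INF n. fA n \<omega>) = ennreal (max (u (S2 \<omega>)) 0)" for \<omega>
    proof -
      have "decseq (\<lambda>n. fA n \<omega>)"
        by (rule decseq_SucI) (use decseq_SucD[OF fA_dec] in \<open>simp add: le_fun_def\<close>)
      from LIMSEQ_INF[OF this] show ?thesis using fA_lim LIMSEQ_unique by blast
    qed
    have "(\<integral>\<^sup>+\<omega>. (INF n. fA n \<omega>) \<partial>M) = (INF n. (\<integral>\<^sup>+\<omega>. fA n \<omega> \<partial>M))"
    proof (rule nn_integral_monotone_convergence_INF_decseq[OF fA_dec])
      show "fA n \<in> borel_measurable M" for n unfolding fA_def by measurable
      show "(\<integral>\<^sup>+\<omega>. fA 0 \<omega> \<partial>M) < \<infinity>" by (rule fA_fin)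
    qed
    then have AINF: "A = (INF n. An n)" unfolding fA_INF A_def An_def by (simp only: fA_def)
    have An_dec: "decseq An"
      unfolding An_def un_def by (intro decseq_SucI le_funI nn_integral_mono ennreal_leI max.mono order_refl mdec)
    have An_lim: "An \<longlonglongrightarrow> A" unfolding AINF by (rule LIMSEQ_INF[OF An_dec])
    define fB where "fB n \<omega> = ennreal (max (- un n (S2 \<omega>)) 0)" for n \<omega>
    have fB_inc: "incseq fB"
      unfolding fB_def un_def
      by (intro incseq_SucI le_funI ennreal_leI max.mono order_refl mdec le_imp_neg_le)
    have fB_lim: "(\<lambda>n. fB n \<omega>) \<longlonglongrightarrow> ennreal (max (- u (S2 \<omega>)) 0)" for \<omega>
      unfolding fB_def un_def by (intro tendsto_ennrealI tendsto_max tendsto_minus mlim tendsto_const)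
    have fB_SUP: "(SUP n. fB n \<omega>) = ennreal (max (- u (S2 \<omega>)) 0)" for \<omega>
    proof -
      have "incseq (\<lambda>n. fB n \<omega>)"
        by (rule incseq_SucI) (use incseq_SucD[OF fB_inc] in \<open>simp add: le_fun_def\<close>)
      from LIMSEQ_SUP[OF this] show ?thesis using fB_lim LIMSEQ_unique by blast
    qed
    have "(\<integral>\<^sup>+\<omega>. (SUP n. fB n \<omega>) \<partial>M) = (SUP n. (\<integral>\<^sup>+\<omega>. fB n \<omega> \<partial>M))"
    proof (rule nn_integral_monotone_convergence_SUP[OF fB_inc])
      show "fB n \<in> borel_measurable M" for n unfolding fB_def by measurable
    qed
    then have BSUP: "B = (SUP n. Bn n)" unfolding fB_SUP B_def Bn_def by (simp only: fB_def)
    have Bn_inc: "incseq Bn"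
      unfolding Bn_def un_def by (intro incseq_SucI le_funI nn_integral_mono ennreal_leI max.mono order_refl mdec le_imp_neg_le)
    have Bn_lim: "Bn \<longlonglongrightarrow> B" unfolding BSUP by (rule LIMSEQ_SUP[OF Bn_inc])
    have lim: "(\<lambda>n. enn2ereal (An n) - enn2ereal (Bn n)) \<longlonglongrightarrow> enn2ereal A - enn2ereal B"
    proof (rule tendsto_diff_ereal_general)
      show "(\<lambda>n. enn2ereal (An n)) \<longlonglongrightarrow> enn2ereal A" using An_lim by simp
      show "(\<lambda>n. enn2ereal (Bn n)) \<longlonglongrightarrow> enn2ereal B" using Bn_lim by simp
      have "enn2ereal A \<noteq> \<infinity>" using Afin by (cases A rule: ennreal_cases) auto
      moreover have "enn2ereal A \<noteq> -\<infinity>" using enn2ereal_nonneg[of A] by auto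
      ultimately show "\<not> ((enn2ereal A = \<infinity> \<and> enn2ereal B = \<infinity>) \<or> (enn2ereal A = -\<infinity> \<and> enn2ereal B = -\<infinity>))"
        by blast
    qed
    show ?thesis unfolding E2
      by (rule LIMSEQ_le_const[OF lim]) (use bound in blast)
  qed
qed

lemma sl_co:
  fixes X Y X' Y' :: "'a \<Rightarrow> real" and f g :: "real \<Rightarrow> real"
  assumes P: "prob_space M"
    and Xm: "X \<in> borel_measurable M" and Ym: "Y \<in> borel_measurable M"
    and X'm: "X' \<in> borel_measurable M" and Y'm: "Y' \<in> borel_measurable M"
    and dX: "distr M borel X' = distr M borel X" and dY: "distr M borel Y' = distr M borel Y"
    and f: "mono f" and g: "mono g" and AE: "AE \<omega> in M. X' \<omega> = f (Z \<omega>) \<and> Y' \<omega> = g (Z \<omega>)"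
  shows "(\<integral>\<^sup>+\<omega>. ennreal (X \<omega> + Y \<omega> - d) \<partial>M) \<le> (\<integral>\<^sup>+\<omega>. ennreal (X' \<omega> + Y' \<omega> - d) \<partial>M)"
  unfolding sl_fubini[OF P Xm Ym] sl_fubini[OF P X'm Y'm]
  by (intro nn_integral_mono prob_co[OF P Xm Ym X'm Y'm dX dY f g AE])

lemma sl_ct:
  fixes X Y X' Y' :: "'a \<Rightarrow> real" and f g :: "real \<Rightarrow> real"
  assumes P: "prob_space M"
    and Xm: "X \<in> borel_measurable M" and Ym: "Y \<in> borel_measurable M"
    and X'm: "X' \<in> borel_measurable M" and Y'm: "Y' \<in> borel_measurable M"
    and dX: "distr M borel X' = distr M borel X" and dY: "distr M borel Y' = distr M borel Y"
    and f: "mono f" and g: "mono g" and AE: "AE \<omega> in M. X' \<omega> = f (Z \<omega>) \<and> - Y' \<omega> = g (Z \<omega>)"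
  shows "(\<integral>\<^sup>+\<omega>. ennreal (X' \<omega> + Y' \<omega> - d) \<partial>M) \<le> (\<integral>\<^sup>+\<omega>. ennreal (X \<omega> + Y \<omega> - d) \<partial>M)"
  unfolding sl_fubini[OF P Xm Ym] sl_fubini[OF P X'm Y'm]
  by (intro nn_integral_mono prob_ct[OF P Xm Ym X'm Y'm dX dY f g AE])

lemma distr_neg:
  fixes X X' :: "'a \<Rightarrow> real"
  assumes Xm: "X \<in> borel_measurable M" and X'm: "X' \<in> borel_measurable M"
    and d: "distr M borel X' = distr M borel X"
  shows "distr M borel (\<lambda>\<omega>. - X' \<omega>) = distr M borel (\<lambda>\<omega>. - X \<omega>)"
proof -
  have um: "uminus \<in> borel_measurable (borel :: real measure)" by measurable
  have "distr M borel (\<lambda>\<omega>. - X' \<omega>) = distr (distr M borel X') borel uminus"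
    using distr_distr[OF um X'm] by (simp add: comp_def)
  also have "\<dots> = distr (distr M borel X) borel uminus" by (simp add: d)
  also have "\<dots> = distr M borel (\<lambda>\<omega>. - X \<omega>)"
    using distr_distr[OF um Xm] by (simp add: comp_def)
  finally show ?thesis .
qed

lemma mono_neg: "mono (f :: real \<Rightarrow> real) \<Longrightarrow> mono (\<lambda>z. - f (- z))"
  by (auto simp: mono_def)

lemma neg_eq: "(\<lambda>\<omega>. ennreal (d - (X \<omega> + Y \<omega>))) = (\<lambda>\<omega>. ennreal ((- X \<omega>) + (- Y \<omega>) - (- d)))"
  for X Y :: "'a \<Rightarrow> real"
  by (intro ext arg_cong[where f=ennreal]) linarith

theorem theorem3:
  fixes M :: "'a measure" and X Y Xco Yco Xct Yct :: "'a \<Rightarrow> real"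
  assumes "prob_space M" and "atomless M"
    and "X \<in> borel_measurable M" and "Y \<in> borel_measurable M"
    and "comonotonic_version M X Y Xco Yco"
    and "counter_monotonic_version M X Y Xct Yct"
  shows "cx_le M (\<lambda>w. Xct w + Yct w) M (\<lambda>w. X w + Y w)
       \<and> cx_le M (\<lambda>w. X w + Y w) M (\<lambda>w. Xco w + Yco w)"
proof
  note P = assms(1)
  note Xm[measurable] = assms(3) and Ym[measurable] = assms(4)
  have nXm: "(\<lambda>\<omega>. - X \<omega>) \<in> borel_measurable M" by measurable
    have nYm: "(\<lambda>\<omega>. - Y \<omega>) \<in> borel_measurable M" by measurable
  show "cx_le M (\<lambda>w. X w + Y w) M (\<lambda>w. Xco w + Yco w)"
  proof -
    have Xcom[measurable]: "Xco \<in> borel_measurable M" and Ycom[measurable]: "Yco \<in> borel_measurable M"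
      and co: "comonotonic M Xco Yco"
      and dX: "distr M borel Xco = distr M borel X" and dY: "distr M borel Yco = distr M borel Y"
      using assms(5) unfolding comonotonic_version_def by blast+
    obtain Z :: "'a \<Rightarrow> real" and f g :: "real \<Rightarrow> real" where f: "mono f" and g: "mono g" and AE: "AE \<omega> in M. Xco \<omega> = f (Z \<omega>) \<and> Yco \<omega> = g (Z \<omega>)"
      using co unfolding comonotonic_def by blast
    have nXcom: "(\<lambda>\<omega>. - Xco \<omega>) \<in> borel_measurable M" by measurable
    have nYcom: "(\<lambda>\<omega>. - Yco \<omega>) \<in> borel_measurable M" by measurable
    have AE': "AE \<omega> in M. - Xco \<omega> = (\<lambda>z. - f (- z)) (- Z \<omega>) \<and> - Yco \<omega> = (\<lambda>z. - g (- z)) (- Z \<omega>)"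
      using AE by eventually_elim simp
    show ?thesis
    proof (rule cx_from_sl[OF P])
      show "(\<integral>\<^sup>+\<omega>. ennreal (X \<omega> + Y \<omega> - d) \<partial>M) \<le> (\<integral>\<^sup>+\<omega>. ennreal (Xco \<omega> + Yco \<omega> - d) \<partial>M)" for d
        by (rule sl_co[OF P Xm Ym Xcom Ycom dX dY f g AE])
      show "(\<integral>\<^sup>+\<omega>. ennreal (d - (X \<omega> + Y \<omega>)) \<partial>M) \<le> (\<integral>\<^sup>+\<omega>. ennreal (d - (Xco \<omega> + Yco \<omega>)) \<partial>M)" for d
        unfolding neg_eq[of d X Y] neg_eq[of d Xco Yco]
        by (rule sl_co[OF P nXm nYm nXcom nYcom distr_neg[OF Xm Xcom dX] distr_neg[OF Ym Ycom dY]
              mono_neg[OF f] mono_neg[OF g] AE'])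
    qed measurable
  qed
  show "cx_le M (\<lambda>w. Xct w + Yct w) M (\<lambda>w. X w + Y w)"
  proof -
    have Xctm[measurable]: "Xct \<in> borel_measurable M" and Yctm[measurable]: "Yct \<in> borel_measurable M"
      and ct: "counter_monotonic M Xct Yct"
      and dX: "distr M borel Xct = distr M borel X" and dY: "distr M borel Yct = distr M borel Y"
      using assms(6) unfolding counter_monotonic_version_def by blast+
    obtain Z :: "'a \<Rightarrow> real" and f g :: "real \<Rightarrow> real" where f: "mono f" and g: "mono g" and AE: "AE \<omega> in M. Xct \<omega> = f (Z \<omega>) \<and> - Yct \<omega> = g (Z \<omega>)"
      using ct unfolding counter_monotonic_def comonotonic_def by blast
    have nXctm: "(\<lambda>\<omega>. - Xct \<omega>) \<in> borel_measurable M" by measurable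
    have nYctm: "(\<lambda>\<omega>. - Yct \<omega>) \<in> borel_measurable M" by measurable
    have AE': "AE \<omega> in M. - Xct \<omega> = (\<lambda>z. - f (- z)) (- Z \<omega>) \<and> - (- Yct \<omega>) = (\<lambda>z. - g (- z)) (- Z \<omega>)"
      using AE by eventually_elim simp
    show ?thesis
    proof (rule cx_from_sl[OF P])
      show "(\<integral>\<^sup>+\<omega>. ennreal (Xct \<omega> + Yct \<omega> - d) \<partial>M) \<le> (\<integral>\<^sup>+\<omega>. ennreal (X \<omega> + Y \<omega> - d) \<partial>M)" for d
        by (rule sl_ct[OF P Xm Ym Xctm Yctm dX dY f g AE])
      show "(\<integral>\<^sup>+\<omega>. ennreal (d - (Xct \<omega> + Yct \<omega>)) \<partial>M) \<le> (\<integral>\<^sup>+\<omega>. ennreal (d - (X \<omega> + Y \<omega>)) \<partial>M)" for d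
        unfolding neg_eq[of d X Y] neg_eq[of d Xct Yct]
        by (rule sl_ct[OF P nXm nYm nXctm nYctm distr_neg[OF Xm Xctm dX] distr_neg[OF Ym Yctm dY]
              mono_neg[OF f] mono_neg[OF g] AE'])
    qed measurable
  qed
qed

end
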